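(* Let $\mathbf{L}$ be a distributive lattice, $n\ge1$ an integer, $F$ an $n$-filter on $\mathbf{L}$ and $I$ an ideal of $\mathbf{L}$ with $F\cap I=\emptyset$. Then there is a prime $n$-filter $G\supseteq F$ on $\mathbf{L}$ with $G\cap I=\emptyset$.
   Context: For a set $X$, $Y\subseteq_n X$ means $Y$ is a non-empty subset of $X$ with $|Y|\le n$. An $n$-filter on a lattice is an upset $F$ such that for every non-empty finite $X\subseteq F$: if $\bigwedge Y\in F$ for every $Y\subseteq_n X$ then $\bigwedge X\in F$. A prime $n$-filter is an $n$-filter $F$ such that $a\vee b\in F$ implies $a\in F$ or $b\in F$. An ideal is a downset closed under binary joins (possibly empty). *)

theory Defs
  imports Main
begin

definition subset_n :: "'a set \<Rightarrow> nat \<Rightarrow> 'a set \<Rightarrow> bool" where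
  "subset_n Y n X \<longleftrightarrow> Y \<subseteq> X \<and> Y \<noteq> {} \<and> finite Y \<and> card Y \<le> n"

definition upset :: "'a::order set \<Rightarrow> bool" where
  "upset F \<longleftrightarrow> (\<forall>a b. a \<in> F \<longrightarrow> a \<le> b \<longrightarrow> b \<in> F)"

definition downset :: "'a::order set \<Rightarrow> bool" where
  "downset I \<longleftrightarrow> (\<forall>a b. a \<in> I \<longrightarrow> b \<le> a \<longrightarrow> b \<in> I)"

definition n_filter :: "nat \<Rightarrow> 'a::lattice set \<Rightarrow> bool" where
  "n_filter n F \<longleftrightarrow> upset F \<and>
     (\<forall>X. finite X \<and> X \<noteq> {} \<and> X \<subseteq> F \<longrightarrow>
        (\<forall>Y. subset_n Y n X \<longrightarrow> Inf_fin Y \<in> F) \<longrightarrow> Inf_fin X \<in> F)"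

definition prime_n_filter :: "nat \<Rightarrow> 'a::lattice set \<Rightarrow> bool" where
  "prime_n_filter n F \<longleftrightarrow> n_filter n F \<and>
     (\<forall>a b. sup a b \<in> F \<longrightarrow> a \<in> F \<or> b \<in> F)"

definition lattice_ideal :: "'a::lattice set \<Rightarrow> bool" where
  "lattice_ideal I \<longleftrightarrow> downset I \<and> (\<forall>a b. a \<in> I \<longrightarrow> b \<in> I \<longrightarrow> sup a b \<in> I)"

end

theory Submission
  imports Defs
begin

lemma Inf_fin_sup_distrib:
  fixes Y :: "'a::distrib_lattice set"
  assumes "finite Y" "Y \<noteq> {}"
  shows "Inf_fin ((\<lambda>y. sup y j) ` Y) = sup (Inf_fin Y) j"
  using assms
proof (induction Y rule: finite_ne_induct)
  case (singleton x) then show ?case by simp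
next
  case (insert x F)
  then show ?case by (simp add: sup_inf_distrib2)
qed

lemma ideal_Sup_fin:
  fixes S :: "'a::lattice set"
  assumes "lattice_ideal J" "finite S" "S \<noteq> {}" "S \<subseteq> J"
  shows "Sup_fin S \<in> J"
  using assms(2,3,4)
proof (induction S rule: finite_ne_induct)
  case (singleton x) then show ?case by simp
next
  case (insert x F)
  then show ?case using assms(1) by (simp add: lattice_ideal_def)
qed

theorem mainTheorem8:
  fixes F I :: "'a::distrib_lattice set" and n :: nat
  assumes "n \<ge> 1"
    and "n_filter n F"
    and "lattice_ideal I"
    and "F \<inter> I = {}"
  shows "\<exists>G. prime_n_filter n G \<and> F \<subseteq> G \<and> G \<inter> I = {}"
proof -
  define A where "A = {J. lattice_ideal J \<and> I \<subseteq> J \<and> J \<inter> F = {}}"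
  have "I \<in> A" using assms unfolding A_def by auto
  hence "A \<noteq> {}" by auto
  have "\<exists>M\<in>A. \<forall>X\<in>A. M \<subseteq> X \<longrightarrow> X = M"
  proof (rule subset_Zorn_nonempty[OF \<open>A \<noteq> {}\<close>])
    fix C assume C: "C \<noteq> {}" "subset.chain A C"
    hence CA: "C \<subseteq> A" and ch: "\<forall>X\<in>C. \<forall>Y\<in>C. X \<subseteq> Y \<or> Y \<subseteq> X"
      by (auto simp: pred_on.chain_def)
    have "lattice_ideal (\<Union>C)"
      unfolding lattice_ideal_def downset_def
    proof safe
      fix a b X assume "X \<in> C" "a \<in> X" "b \<le> a"
      hence "b \<in> X" using CA by (auto simp: A_def lattice_ideal_def downset_def)
      thus "b \<in> \<Union>C" using \<open>X \<in> C\<close> by blast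
    next
      fix a b X Y assume XY: "X \<in> C" "a \<in> X" "Y \<in> C" "b \<in> Y"
      show "sup a b \<in> \<Union>C"
      proof (cases "X \<subseteq> Y")
        case True
        hence "a \<in> Y" using XY by blast
        moreover have "lattice_ideal Y" using XY CA unfolding A_def by blast
        ultimately have "sup a b \<in> Y" using XY(4) unfolding lattice_ideal_def by blast
        then show ?thesis using XY by blast
      next
        case False
        hence "Y \<subseteq> X" using ch XY by blast
        hence "b \<in> X" using XY by blast
        moreover have "lattice_ideal X" using XY CA unfolding A_def by blast
        ultimately have "sup a b \<in> X" using XY(2) unfolding lattice_ideal_def by blast
        then show ?thesis using XY by blast
      qed
    qed
    moreover have "I \<subseteq> \<Union>C" "\<Union>C \<inter> F = {}" using C CA by (auto simp: A_def)
    ultimately show "\<Union>C \<in> A" by (simp add: A_def)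
  qed
  then obtain J where JA: "J \<in> A" and Jmax: "\<And>K. K \<in> A \<Longrightarrow> J \<subseteq> K \<Longrightarrow> K = J" by blast
  have Jid: "lattice_ideal J" and IJ: "I \<subseteq> J" and JF: "J \<inter> F = {}" using JA by (auto simp: A_def)
  have Fup: "upset F" using assms(2) by (simp add: n_filter_def)
  have Jdown: "downset J" using Jid by (simp add: lattice_ideal_def)
  have Jsup: "\<And>a b. a \<in> J \<Longrightarrow> b \<in> J \<Longrightarrow> sup a b \<in> J" using Jid by (simp add: lattice_ideal_def)
  have key: "\<exists>j\<in>J. sup x j \<in> F" if "x \<notin> J" "J \<noteq> {}" for x
  proof -
    define K where "K = {y. \<exists>j\<in>J. y \<le> sup x j}"
    have "lattice_ideal K"
      unfolding lattice_ideal_def downset_def K_def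
    proof safe
      fix a b j assume "j \<in> J" "a \<le> sup x j" "b \<le> a"
      thus "\<exists>j\<in>J. b \<le> sup x j" by (meson order_trans)
    next
      fix a b j1 j2 assume "j1 \<in> J" "a \<le> sup x j1" "j2 \<in> J" "b \<le> sup x j2"
      hence "sup a b \<le> sup x (sup j1 j2)" "sup j1 j2 \<in> J"
        using Jsup
        by (auto intro: order_trans[of a "sup x j1"] order_trans[of b "sup x j2"] simp: le_supI1 le_supI2)
      thus "\<exists>j\<in>J. sup a b \<le> sup x j" by blast
    qed
    moreover have "J \<subseteq> K" unfolding K_def by (auto intro: sup.cobounded2)
    moreover have "x \<in> K" using \<open>J \<noteq> {}\<close> unfolding K_def by (auto intro: sup.cobounded1)
    ultimately have "K \<notin> A" using Jmax that by blast
    hence "K \<inter> F \<noteq> {}" using \<open>lattice_ideal K\<close> \<open>J \<subseteq> K\<close> IJ by (auto simp: A_def)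
    then obtain z j where "z \<in> F" "j \<in> J" "z \<le> sup x j" by (auto simp: K_def)
    thus ?thesis using Fup by (auto simp: upset_def)
  qed
  define G where "G = - J"
  have "n_filter n G"
  proof (cases "J = {}")
    case True
    then show ?thesis by (simp add: G_def n_filter_def upset_def)
  next
    case Jne: False
    show ?thesis
      unfolding n_filter_def
    proof (intro conjI allI impI)
      show "upset G" using Jdown by (auto simp: upset_def downset_def G_def)
    next
      fix X assume X: "finite X \<and> X \<noteq> {} \<and> X \<subseteq> G"
        and hY: "\<forall>Y. subset_n Y n X \<longrightarrow> Inf_fin Y \<in> G"
      show "Inf_fin X \<in> G"
      proof (rule ccontr)
        assume "Inf_fin X \<notin> G"
        hence XJ: "Inf_fin X \<in> J" by (simp add: G_def)
        define S where "S = {Y. subset_n Y n X}"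
        have "S \<subseteq> Pow X" unfolding S_def subset_n_def by blast
        moreover have "finite (Pow X)" using X by simp
        ultimately have finS: "finite S" by (rule finite_subset)
        obtain x0 where "x0 \<in> X" using X by auto
        hence "{x0} \<in> S" using assms(1) by (simp add: S_def subset_n_def)
        hence Sne: "S \<noteq> {}" by auto
        have "\<forall>Y\<in>S. \<exists>j. j \<in> J \<and> sup (Inf_fin Y) j \<in> F"
        proof
          fix Y assume "Y \<in> S"
          hence "Inf_fin Y \<notin> J" using hY by (simp add: S_def G_def)
          from key[OF this Jne] show "\<exists>j. j \<in> J \<and> sup (Inf_fin Y) j \<in> F" by blast
        qed
        from bchoice[OF this] obtain g where g0: "\<forall>Y\<in>S. g Y \<in> J \<and> sup (Inf_fin Y) (g Y) \<in> F"
          by blast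
        have g: "\<And>Y. Y \<in> S \<Longrightarrow> g Y \<in> J \<and> sup (Inf_fin Y) (g Y) \<in> F" using g0 by blast
        define j where "j = Sup_fin (g ` S)"
        have jJ: "j \<in> J" unfolding j_def
          using ideal_Sup_fin[OF Jid] finS Sne g by auto
        have gj: "g Y \<le> j" if "Y \<in> S" for Y
          unfolding j_def using finS that by (simp add: Sup_fin.coboundedI)
        have inF: "sup (Inf_fin Y) j \<in> F" if "Y \<in> S" for Y
        proof -
          have "sup (Inf_fin Y) (g Y) \<le> sup (Inf_fin Y) j" using gj[OF that] by (simp add: sup.coboundedI2)
          thus ?thesis using g[OF that] Fup by (auto simp: upset_def)
        qed
        define f where "f = (\<lambda>y. sup y j)"
        define X' where "X' = f ` X"
        have X'F: "X' \<subseteq> F"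
        proof
          fix z assume "z \<in> X'"
          then obtain x where "x \<in> X" "z = f x" by (auto simp: X'_def)
          hence "{x} \<in> S" using assms(1) by (simp add: S_def subset_n_def)
          hence "sup (Inf_fin {x}) j \<in> F" by (rule inF)
          thus "z \<in> F" using \<open>z = f x\<close> by (simp add: f_def)
        qed
        have hY': "\<forall>Y'. subset_n Y' n X' \<longrightarrow> Inf_fin Y' \<in> F"
        proof (intro allI impI)
          fix Y' assume Y': "subset_n Y' n X'"
          hence "Y' \<subseteq> f ` X" by (simp add: subset_n_def X'_def)
          then obtain U where U: "U \<subseteq> X" "inj_on f U" "Y' = f ` U"
            by (auto simp: subset_image_inj)
          have "card U = card Y'" using U(2,3) card_image by metis
          have fU: "finite U" using X U(1) finite_subset by blast
          have neU: "U \<noteq> {}" using Y' U(3) by (auto simp: subset_n_def)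
          have "card U \<le> n" using Y' \<open>card U = card Y'\<close> by (simp add: subset_n_def)
          hence "U \<in> S" using fU neU U(1) by (simp add: S_def subset_n_def)
          hence "sup (Inf_fin U) j \<in> F" by (rule inF)
          moreover have "Inf_fin (f ` U) = sup (Inf_fin U) j"
            using Inf_fin_sup_distrib[OF fU neU, of j] by (simp add: f_def)
          ultimately show "Inf_fin Y' \<in> F" using U(3) by simp
        qed
        have X'1: "finite X' \<and> X' \<noteq> {} \<and> X' \<subseteq> F" using X X'F by (auto simp: X'_def)
        have "Inf_fin X' \<in> F"
          using assms(2) X'1 hY' unfolding n_filter_def by blast
        moreover have "Inf_fin X' = sup (Inf_fin X) j"
          using X Inf_fin_sup_distrib[of X j] by (simp add: X'_def f_def)
        moreover have "sup (Inf_fin X) j \<in> J" using Jsup XJ jJ by simp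
        ultimately show False using JF by auto
      qed
    qed
  qed
  moreover have "\<forall>a b. sup a b \<in> G \<longrightarrow> a \<in> G \<or> b \<in> G"
    using Jsup by (auto simp: G_def)
  ultimately have "prime_n_filter n G" by (simp add: prime_n_filter_def)
  moreover have "F \<subseteq> G" "G \<inter> I = {}" using JF IJ by (auto simp: G_def)
  ultimately show ?thesis by blast
qed

end
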